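(* Let $(X,d)$, $(\Lambda,d_\Lambda)$ be compact metric spaces, $\tau:\Lambda\times X\to X$ continuous and $q:X\to\mathcal P(\Lambda)$ continuous. Assume: (M1) there is $s>0$ such that $\int_\Lambda|f(\tau(\lambda,x))-f(\tau(\lambda,y))|\,dq_x(\lambda)\le s\,d(x,y)$ for all $x,y\in X$ and all $f\in\mathrm{Lip}_1(X)$; (H2) there is $r\ge0$ with $d(\tau(\lambda_1,x),\tau(\lambda_2,x))\le r\,d_\Lambda(\lambda_1,\lambda_2)$ for all $\lambda_1,\lambda_2\in\Lambda$, $x\in X$; (H3) there is $t\ge0$ with $d_{MK}(q_x,q_y)\le t\,d(x,y)$ for all $x,y\in X$. Then there exists $c>0$ such that for every $f\in\mathrm{Lip}_1(X)$, the function $B_q(f)$ is $c$-Lipschitz on $X$.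
   Context: $\mathcal{P}(Y)$ is the set of Borel probability measures on a compact metric space $Y$, with $d_{MK}(\mu,\nu)=\sup_{f\in \mathrm{Lip}_1(Y)}\{\int f\,d\mu-\int f\,d\nu\}$, where $\mathrm{Lip}_1(Y)$ is the set of real $1$-Lipschitz functions on $Y$. The transfer operator is $B_q(f)(x)=\int_\Lambda f(\tau(\lambda,x))\,dq_x(\lambda)$. *)

theory Defs
  imports "HOL-Probability.Probability"
begin

definition borel_prob :: "'b::metric_space measure \<Rightarrow> bool" where
  "borel_prob \<mu> \<longleftrightarrow> prob_space \<mu> \<and> sets \<mu> = sets borel"

definition d_MK :: "'b::metric_space measure \<Rightarrow> 'b measure \<Rightarrow> real" where
  "d_MK \<mu> \<nu> = (SUP f\<in>{f::'b \<Rightarrow> real. 1-lipschitz_on UNIV f}.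
                  (\<integral>y. f y \<partial>\<mu>) - (\<integral>y. f y \<partial>\<nu>))"

text \<open>Continuity of x \<mapsto> q x into P(Lambda) with the weak topology:
  all maps x \<mapsto> \<integral> g dq_x, g continuous (hence bounded, Lambda compact), are continuous.\<close>
definition weak_continuous :: "('a::topological_space \<Rightarrow> 'b::metric_space measure) \<Rightarrow> bool" where
  "weak_continuous q \<longleftrightarrow>
     (\<forall>g::'b \<Rightarrow> real. continuous_on UNIV g \<longrightarrow> continuous_on UNIV (\<lambda>x. \<integral>l. g l \<partial>(q x)))"

definition B_q :: "('a \<Rightarrow> 'b measure) \<Rightarrow> ('b \<Rightarrow> 'a \<Rightarrow> 'a) \<Rightarrow> ('a \<Rightarrow> real) \<Rightarrow> 'a \<Rightarrow> real" where
  "B_q q \<tau> f x = (\<integral>l. f (\<tau> l x) \<partial>(q x))"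

end

theory Submission
  imports Defs
begin

lemma bp_integrable:
  fixes M :: "'l::metric_space measure" and g :: "'l \<Rightarrow> real"
  assumes cpt: "compact (UNIV :: 'l set)" and bp: "borel_prob M" and gc: "continuous_on UNIV g"
  shows "integrable M g"
proof -
  have ps: "prob_space M" and se: "sets M = sets borel" using bp by (auto simp: borel_prob_def)
  have "compact (g ` UNIV)" using compact_continuous_image[OF gc cpt] .
  then have "bounded (range g)" by (rule compact_imp_bounded)
  then obtain B where B: "\<And>l. norm (g l) \<le> B" by (auto simp: bounded_iff)
  have m: "g \<in> borel_measurable M"
    using borel_measurable_continuous_onI[OF gc] measurable_cong_sets[OF se refl] by blast
  interpret prob_space M by (rule ps)
  show ?thesis
    by (rule integrable_const_bound[where B=B]) (use B m in auto)
qed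

lemma bp_bdd:
  fixes \<mu> \<nu> :: "'l::metric_space measure"
  assumes cpt: "compact (UNIV :: 'l set)" and bm: "borel_prob \<mu>" and bn: "borel_prob \<nu>"
  shows "bdd_above ((\<lambda>f. (\<integral>y. f y \<partial>\<mu>) - (\<integral>y. f y \<partial>\<nu>)) ` {f::'l \<Rightarrow> real. 1-lipschitz_on UNIV f})"
proof -
  have pm: "prob_space \<mu>" and pn: "prob_space \<nu>" using bm bn by (auto simp: borel_prob_def)
  obtain l0 :: 'l where True by auto
  have "bounded (UNIV :: 'l set)" using cpt by (rule compact_imp_bounded)
  then obtain D where D: "\<And>l::'l. dist l0 l \<le> D" by (meson bounded_any_center UNIV_I)
  show ?thesis
  proof (rule bdd_aboveI[where M="2 * D"])
    fix v assume "v \<in> (\<lambda>f. (\<integral>y. f y \<partial>\<mu>) - (\<integral>y. f y \<partial>\<nu>)) ` {f::'l \<Rightarrow> real. 1-lipschitz_on UNIV f}"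
    then obtain f :: "'l \<Rightarrow> real" where f: "1-lipschitz_on UNIV f" and v: "v = (\<integral>y. f y \<partial>\<mu>) - (\<integral>y. f y \<partial>\<nu>)" by auto
    have fc: "continuous_on UNIV f" using lipschitz_on_continuous_on[OF f] .
    have fb: "\<bar>f l - f l0\<bar> \<le> D" for l
    proof -
      have "dist (f l) (f l0) \<le> 1 * dist l l0" using lipschitz_onD[OF f] by blast
      then show ?thesis using D[of l] by (simp add: dist_real_def dist_commute)
    qed
    have fb1: "f l \<le> f l0 + D" and fb2: "f l0 - D \<le> f l" for l using fb[of l] by linarith+
    interpret pm: prob_space \<mu> by (rule pm)
    interpret pn: prob_space \<nu> by (rule pn)
    have i1: "integrable \<mu> f" by (rule bp_integrable[OF cpt bm fc])
    have i2: "integrable \<nu> f" by (rule bp_integrable[OF cpt bn fc])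
    have "(\<integral>y. f y \<partial>\<mu>) \<le> (\<integral>y. f l0 + D \<partial>\<mu>)"
      by (rule integral_mono[OF i1]) (use fb1 in auto)
    also have "\<dots> = f l0 + D" using prob_space.prob_space[OF pm] by simp
    finally have a: "(\<integral>y. f y \<partial>\<mu>) \<le> f l0 + D" .
    have "(\<integral>y. f l0 - D \<partial>\<nu>) \<le> (\<integral>y. f y \<partial>\<nu>)"
      by (rule integral_mono[OF _ i2]) (use fb2 in auto)
    moreover have "(\<integral>y. f l0 - D \<partial>\<nu>) = f l0 - D" using prob_space.prob_space[OF pn] by simp
    ultimately have b: "f l0 - D \<le> (\<integral>y. f y \<partial>\<nu>)" by linarith
    show "v \<le> 2 * D" using a b v by simp
  qed
qed

lemma bp_lip:
  fixes \<mu> \<nu> :: "'l::metric_space measure" and g :: "'l \<Rightarrow> real"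
  assumes cpt: "compact (UNIV :: 'l set)" and bm: "borel_prob \<mu>" and bn: "borel_prob \<nu>"
    and g: "L-lipschitz_on UNIV g"
  shows "(\<integral>y. g y \<partial>\<mu>) - (\<integral>y. g y \<partial>\<nu>) \<le> L * d_MK \<mu> \<nu>"
proof -
  have pm: "prob_space \<mu>" and pn: "prob_space \<nu>" using bm bn by (auto simp: borel_prob_def)
  have L0: "L \<ge> 0" using g by (auto simp: lipschitz_on_def)
  show ?thesis
  proof (cases "L = 0")
    case True
    obtain l0 :: 'l where True by auto
    have "g l = g l0" for l using lipschitz_onD[OF g, of l l0] True by simp
    then obtain c where "\<And>l. g l = c" by blast
    then have e: "g = (\<lambda>_. c)" by auto
    show ?thesis unfolding e using True prob_space.prob_space[OF pm] prob_space.prob_space[OF pn] by simp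
  next
    case False
    then have Lp: "L > 0" using L0 by simp
    have h: "1-lipschitz_on UNIV (\<lambda>y. g y / L)"
    proof (rule lipschitz_onI)
      fix x y :: 'l
      have "dist (g x) (g y) \<le> L * dist x y" using lipschitz_onD[OF g] by blast
      have d1: "dist (g x / L) (g y / L) = dist (g x) (g y) / L"
        using Lp by (simp add: dist_real_def diff_divide_distrib[symmetric] abs_divide)
      have "dist (g x) (g y) / L \<le> (L * dist x y) / L"
        by (rule divide_right_mono[OF \<open>dist (g x) (g y) \<le> L * dist x y\<close>]) (use Lp in simp)
      also have "\<dots> = 1 * dist x y" using Lp by simp
      finally show "dist (g x / L) (g y / L) \<le> 1 * dist x y" using d1 by simp
    qed simp
    have "(\<integral>y. g y / L \<partial>\<mu>) - (\<integral>y. g y / L \<partial>\<nu>) \<le> d_MK \<mu> \<nu>"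
      unfolding d_MK_def
      by (rule cSUP_upper[OF _ bp_bdd[OF cpt bm bn]]) (use h in auto)
    then have "((\<integral>y. g y \<partial>\<mu>) - (\<integral>y. g y \<partial>\<nu>)) / L \<le> d_MK \<mu> \<nu>"
      by (simp add: diff_divide_distrib)
    then show ?thesis using Lp by (simp add: pos_divide_le_eq mult.commute)
  qed
qed

theorem mainTheorem6:
  fixes \<tau> :: "'l::metric_space \<Rightarrow> 'x::metric_space \<Rightarrow> 'x"
    and q :: "'x \<Rightarrow> 'l measure"
  assumes cptX: "compact (UNIV :: 'x set)"
    and cptL: "compact (UNIV :: 'l set)"
    and tau_cont: "continuous_on UNIV (\<lambda>(l, x). \<tau> l x)"
    and q_prob: "\<And>x. borel_prob (q x)"
    and q_cont: "weak_continuous q"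
    and M1: "\<exists>s>0. \<forall>x y. \<forall>f::'x \<Rightarrow> real. 1-lipschitz_on UNIV f \<longrightarrow>
               (\<integral>l. \<bar>f (\<tau> l x) - f (\<tau> l y)\<bar> \<partial>(q x)) \<le> s * dist x y"
    and H2: "\<exists>r\<ge>0. \<forall>l1 l2 x. dist (\<tau> l1 x) (\<tau> l2 x) \<le> r * dist l1 l2"
    and H3: "\<exists>t\<ge>0. \<forall>x y. d_MK (q x) (q y) \<le> t * dist x y"
  shows "\<exists>c>0. \<forall>f::'x \<Rightarrow> real. 1-lipschitz_on UNIV f \<longrightarrow> c-lipschitz_on UNIV (B_q q \<tau> f)"
proof -
  obtain s where s: "s > 0" and sM: "\<And>x y f. 1-lipschitz_on UNIV (f::'x \<Rightarrow> real) \<Longrightarrow>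
               (\<integral>l. \<bar>f (\<tau> l x) - f (\<tau> l y)\<bar> \<partial>(q x)) \<le> s * dist x y" using M1 by blast
  obtain r where r: "r \<ge> 0" and rH: "\<And>l1 l2 x. dist (\<tau> l1 x) (\<tau> l2 x) \<le> r * dist l1 l2" using H2 by blast
  obtain t where t: "t \<ge> 0" and tH: "\<And>x y. d_MK (q x) (q y) \<le> t * dist x y" using H3 by blast
  have key: "B_q q \<tau> f x - B_q q \<tau> f y \<le> (s + r * t) * dist x y"
    if f: "1-lipschitz_on UNIV f" for f :: "'x \<Rightarrow> real" and x y
  proof -
    have tl: "r-lipschitz_on UNIV (\<lambda>l. \<tau> l z)" for z
      by (rule lipschitz_onI) (use rH r in auto)
    have fl: "(1 * r)-lipschitz_on UNIV (\<lambda>l. f (\<tau> l z))" for z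
    proof (rule lipschitz_onI)
      fix a b :: 'l
      have "dist (f (\<tau> a z)) (f (\<tau> b z)) \<le> 1 * dist (\<tau> a z) (\<tau> b z)"
        using lipschitz_onD[OF f] by blast
      also have "\<dots> \<le> 1 * r * dist a b" using rH by simp
      finally show "dist (f (\<tau> a z)) (f (\<tau> b z)) \<le> 1 * r * dist a b" .
    qed (use r in simp)
    have ic: "integrable (q w) (\<lambda>l. f (\<tau> l z))" for w z
      by (rule bp_integrable[OF cptL q_prob lipschitz_on_continuous_on[OF fl]])
    have e: "B_q q \<tau> f x - B_q q \<tau> f y =
          (\<integral>l. f (\<tau> l x) - f (\<tau> l y) \<partial>(q x)) +
          ((\<integral>l. f (\<tau> l y) \<partial>(q x)) - (\<integral>l. f (\<tau> l y) \<partial>(q y)))"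
      unfolding B_q_def using Bochner_Integration.integral_diff[OF ic[of x x] ic[of x y]] by simp
    have i1: "(\<integral>l. f (\<tau> l x) - f (\<tau> l y) \<partial>(q x)) \<le> (\<integral>l. \<bar>f (\<tau> l x) - f (\<tau> l y)\<bar> \<partial>(q x))"
      by (rule integral_mono) (use ic in auto)
    have i2: "(\<integral>l. \<bar>f (\<tau> l x) - f (\<tau> l y)\<bar> \<partial>(q x)) \<le> s * dist x y" by (rule sM[OF f])
    have i3: "(\<integral>l. f (\<tau> l y) \<partial>(q x)) - (\<integral>l. f (\<tau> l y) \<partial>(q y)) \<le> (1 * r) * d_MK (q x) (q y)"
      by (rule bp_lip[OF cptL q_prob q_prob fl])
    have i4: "r * d_MK (q x) (q y) \<le> r * (t * dist x y)" using mult_left_mono[OF tH r] .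
    have i5: "r * (t * dist x y) = (r * t) * dist x y" by simp
    have i6: "(s + r * t) * dist x y = s * dist x y + (r * t) * dist x y" by (simp add: distrib_right)
    show ?thesis using e i1 i2 i3 i4 i5 i6 by linarith
  qed
  show ?thesis
  proof (intro exI[of _ "s + r * t"] conjI allI impI)
    show "s + r * t > 0" using s r t by (simp add: add_pos_nonneg)
    fix f :: "'x \<Rightarrow> real" assume f: "1-lipschitz_on UNIV f"
    show "(s + r * t)-lipschitz_on UNIV (B_q q \<tau> f)"
    proof (rule lipschitz_onI)
      fix x y
      show "dist (B_q q \<tau> f x) (B_q q \<tau> f y) \<le> (s + r * t) * dist x y"
      proof -
        have dc: "dist y x = dist x y" by (rule dist_commute)
        show ?thesis using key[OF f, of x y] key[OF f, of y x, unfolded dc]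
          unfolding dist_real_def abs_le_iff by linarith
      qed
    qed (use s r t in simp)
  qed
qed

end
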